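(* Let $A_1,\dots,A_n$ ($n\ge 3$) be distinct points of a difference cograph such that $\mathcal{C}(A_1,A_2)=\mathcal{C}(A_2,A_3)=\dots=\mathcal{C}(A_{n-1},A_n)$. If $n$ is odd then $A_1+A_n=2A_{(n+1)/2}$; if $n$ is even then $A_1+A_n=A_{n/2}+A_{n/2+1}$. (In particular, for a chain $A,B,C$ one has $A+C=2B$, and for a chain $A,B,C,D$ one has $A+D=B+C$.)
   Context: A difference cograph has as points distinct elements either of $\mathbb{Z}$, with edge $\mathcal{C}(P,Q)=|P-Q|$, or of $\mathbb{Z}_m$ for some $m$, with edge $\mathcal{C}(P,Q)=\min|p-q|$ taken over integers $p\in P$, $q\in Q$ (the cosets); sums of points are computed in $\mathbb{Z}$ or $\mathbb{Z}_m$ respectively. *)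

theory Defs
  imports Main
begin

text \<open>The parameter m :: nat selects the cograph:
  m = 0 is the cograph on the integers, m \<ge> 1 is the cograph on Z_m.
  A point of Z_m is represented by any integer representative of its coset;
  two representatives denote the same point iff they agree mod m
  (for m = 0 this is plain equality, since a mod 0 = a).\<close>

definition same_pt :: "nat \<Rightarrow> int \<Rightarrow> int \<Rightarrow> bool" where
  "same_pt m P Q \<longleftrightarrow> P mod int m = Q mod int m"

definition cdist :: "nat \<Rightarrow> int \<Rightarrow> int \<Rightarrow> int" where
  "cdist m P Q =
     (if m = 0 then \<bar>P - Q\<bar>
      else Inf {\<bar>p - q\<bar> | p q. p mod int m = P mod int m \<and> q mod int m = Q mod int m})"

end

theory Submission
  imports Defs "HOL-Number_Theory.Cong"
begin

lemma int_Inf_mem_nonneg: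
  fixes X :: "int set"
  assumes "x0 \<in> X" "\<forall>x\<in>X. 0 \<le> x"
  shows "Inf X \<in> X"
proof -
  let ?Y = "X \<inter> {0..x0}"
  have fin: "finite ?Y" by auto
  have ne: "?Y \<noteq> {}" using assms by auto
  have mem: "Min ?Y \<in> X" using Min_in[OF fin ne] by auto
  have low: "\<forall>x\<in>X. Min ?Y \<le> x"
  proof
    fix x assume "x \<in> X"
    show "Min ?Y \<le> x"
    proof (cases "x \<le> x0")
      case True then show ?thesis using \<open>x \<in> X\<close> assms fin by (auto intro: Min_le)
    next
      case False
      have "Min ?Y \<le> x0" using assms fin by (auto intro: Min_le)
      then show ?thesis using False by simp
    qed
  qed
  have "Inf X = Min ?Y" using mem low by (intro cInf_eq_minimum) auto
  then show ?thesis using mem by simp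
qed

lemma cdist_step:
  assumes "cdist m P Q = c"
  shows "[Q = P + c] (mod int m) \<or> [Q = P - c] (mod int m)"
proof (cases "m = 0")
  case True
  then have "\<bar>P - Q\<bar> = c" using assms by (simp add: cdist_def)
  then show ?thesis using True by (auto simp: cong_def abs_if)
next
  case False
  let ?S = "{\<bar>p - q\<bar> | p q. p mod int m = P mod int m \<and> q mod int m = Q mod int m}"
  have "\<bar>P - Q\<bar> \<in> ?S" by blast
  moreover have "\<forall>x\<in>?S. 0 \<le> x" by auto
  ultimately have "Inf ?S \<in> ?S" by (rule int_Inf_mem_nonneg)
  moreover have "Inf ?S = c" using assms False by (simp add: cdist_def)
  ultimately obtain p q where pq: "p mod int m = P mod int m" "q mod int m = Q mod int m" "\<bar>p - q\<bar> = c"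
    by auto
  have cp: "[P = p] (mod int m)" "[Q = q] (mod int m)" using pq by (auto simp: cong_def)
  have "q = p + c \<or> q = p - c" using pq(3) by (auto simp: abs_if)
  then show ?thesis
  proof
    assume "q = p + c"
    then have "[Q = p + c] (mod int m)" using cp by simp
    moreover have "[p + c = P + c] (mod int m)" using cp by (intro cong_add) (auto simp: cong_sym)
    ultimately show ?thesis by (blast intro: cong_trans)
  next
    assume "q = p - c"
    then have "[Q = p - c] (mod int m)" using cp by simp
    moreover have "[p - c = P - c] (mod int m)" using cp by (intro cong_diff) (auto simp: cong_sym)
    ultimately show ?thesis by (blast intro: cong_trans)
  qed
qed

theorem lemma3p2:
  fixes m :: nat and n :: nat and A :: "nat \<Rightarrow> int"
  assumes "n \<ge> 3"
    and distinct: "\<forall>i j. 1 \<le> i \<and> i < j \<and> j \<le> n \<longrightarrow> \<not> same_pt m (A i) (A j)"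
    and equal_edges: "\<forall>i. 1 \<le> i \<and> i < n \<longrightarrow> cdist m (A i) (A (i + 1)) = cdist m (A 1) (A 2)"
  shows "(odd n \<longrightarrow> same_pt m (A 1 + A n) (2 * A ((n + 1) div 2)))
       \<and> (even n \<longrightarrow> same_pt m (A 1 + A n) (A (n div 2) + A (n div 2 + 1)))"
proof -
  define M where "M = int m"
  define c where "c = cdist m (A 1) (A 2)"
  have dist: "\<not> [A i = A j] (mod M)" if "1 \<le> i" "i < j" "j \<le> n" for i j
    using distinct that by (auto simp: same_pt_def cong_def M_def)
  have stp: "[A (i+1) = A i + c] (mod M) \<or> [A (i+1) = A i - c] (mod M)" if "1 \<le> i" "i < n" for i
    using cdist_step[of m "A i" "A (i+1)" c] equal_edges that by (auto simp: c_def M_def)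
  obtain e where e: "[A 2 = A 1 + e] (mod M)" "e = c \<or> e = - c"
  proof -
    have "[A 2 = A 1 + c] (mod M) \<or> [A 2 = A 1 - c] (mod M)"
      using stp[of 1] assms(1) by (simp add: numeral_2_eq_2)
    then show ?thesis using that by (metis diff_conv_add_uminus)
  qed
  have main: "\<forall>j. 1 \<le> j \<and> j \<le> i \<longrightarrow> [A j = A 1 + int (j - 1) * e] (mod M)"
    if "2 \<le> i" "i \<le> n" for i
    using that
  proof (induction i rule: dec_induct)
    case base
    then show ?case using e(1) by (auto simp: le_Suc_eq numeral_2_eq_2)
  next
    case (step i)
    have IH: "\<forall>j. 1 \<le> j \<and> j \<le> i \<longrightarrow> [A j = A 1 + int (j - 1) * e] (mod M)"
      using step by simp
    have Ai: "[A i = A 1 + int (i - 1) * e] (mod M)" using IH step by simp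
    have Ai1: "[A (i-1) = A 1 + int (i - 1 - 1) * e] (mod M)"
    proof -
      have "1 \<le> i - 1 \<and> i - 1 \<le> i" using step by auto
      then show ?thesis using IH by blast
    qed
    have new: "[A (i+1) = A 1 + int i * e] (mod M)"
    proof -
      from step.prems step.hyps have "1 \<le> i" "i < n" by auto
      then have "[A (i+1) = A i + c] (mod M) \<or> [A (i+1) = A i - c] (mod M)" by (rule stp)
      then have "[A (i+1) = A i + e] (mod M) \<or> [A (i+1) = A i - e] (mod M)"
        using e(2) by auto
      then show ?thesis
      proof
        assume "[A (i+1) = A i + e] (mod M)"
        moreover have "[A i + e = A 1 + int (i - 1) * e + e] (mod M)"
          using Ai by (intro cong_add) auto
        moreover have "A 1 + int (i - 1) * e + e = A 1 + int i * e"
          using step.hyps by (simp add: of_nat_diff algebra_simps)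
        ultimately show ?thesis by (metis cong_trans)
      next
        assume h: "[A (i+1) = A i - e] (mod M)"
        have "[A i - e = A 1 + int (i - 1) * e - e] (mod M)"
          using Ai by (intro cong_diff) auto
        moreover have "A 1 + int (i - 1) * e - e = A 1 + int (i - 1 - 1) * e"
          using step.hyps by (simp add: of_nat_diff algebra_simps)
        ultimately have "[A (i+1) = A (i-1)] (mod M)" using h Ai1
          by (metis cong_sym cong_trans)
        moreover have "\<not> [A (i-1) = A (i+1)] (mod M)"
          using dist[of "i-1" "i+1"] step by auto
        ultimately show ?thesis by (metis cong_sym)
      qed
    qed
    show ?case
    proof (intro allI impI)
      fix j assume "1 \<le> j \<and> j \<le> Suc i"
      then show "[A j = A 1 + int (j - 1) * e] (mod M)"
        using IH new by (cases "j = Suc i") auto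
    qed
  qed
  have Aj: "[A j = A 1 + int (j - 1) * e] (mod M)" if "1 \<le> j" "j \<le> n" for j
    using main[of n] assms(1) that by auto
  show ?thesis
  proof (intro conjI impI)
    assume "odd n"
    then obtain k where k: "n = 2*k+1" by (elim oddE) 
    have k1: "k \<ge> 1" using k assms(1) by simp
    have "[A 1 + A n = A 1 + (A 1 + int (n - 1) * e)] (mod M)"
      using Aj[of n] assms(1) by (intro cong_add) auto
    moreover have "[2 * A ((n+1) div 2) = 2 * (A 1 + int ((n+1) div 2 - 1) * e)] (mod M)"
      using Aj[of "(n+1) div 2"] k k1 by (intro cong_mult) auto
    moreover have "A 1 + (A 1 + int (n - 1) * e) = 2 * (A 1 + int ((n+1) div 2 - 1) * e)"
      using k by (simp add: algebra_simps)
    ultimately show "same_pt m (A 1 + A n) (2 * A ((n + 1) div 2))"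
      unfolding same_pt_def M_def[symmetric] by (metis cong_def cong_sym cong_trans)
  next
    assume "even n"
    then obtain k where k: "n = 2*k" by (elim evenE)
    have k1: "k \<ge> 2" using k assms(1) by simp
    have "[A 1 + A n = A 1 + (A 1 + int (n - 1) * e)] (mod M)"
      using Aj[of n] assms(1) by (intro cong_add) auto
    moreover have "[A (n div 2) + A (n div 2 + 1) = (A 1 + int (n div 2 - 1) * e) + (A 1 + int (n div 2 + 1 - 1) * e)] (mod M)"
      using Aj[of "n div 2"] Aj[of "n div 2 + 1"] k k1 by (intro cong_add) auto
    moreover have "A 1 + (A 1 + int (n - 1) * e) = (A 1 + int (n div 2 - 1) * e) + (A 1 + int (n div 2 + 1 - 1) * e)"
      using k k1 by (simp add: of_nat_diff algebra_simps)
    ultimately show "same_pt m (A 1 + A n) (A (n div 2) + A (n div 2 + 1))"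
      unfolding same_pt_def M_def[symmetric] by (metis cong_def cong_sym cong_trans)
  qed
qed

end
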